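(* Work in $\mathrm{IKP}$. For any set $x$, if (1) every $\beta \in x$ satisfies $\beta \in \mathrm{PlOrd}$, and (2) for every $\gamma \in \mathrm{PlOrd}$, if $\gamma \subseteq \beta$ for some $\beta \in x$ then $\gamma \in x$, then $x \in \mathrm{PlOrd}$.
   Context: $\mathrm{IKP}$ is intuitionistic Kripke–Platek set theory (with strong infinity). An ordinal is a transitive set of transitive sets. For sets $\alpha,\gamma$, write $\mathrm{relpl}_\alpha(\gamma)$ for the formula $\forall \delta \in \gamma\ \forall \varepsilon \in \alpha\,(\varepsilon \subseteq \delta \rightarrow \varepsilon \in \gamma)$. $\mathrm{PlOrd}$ is the class of ordinals $\alpha$ such that for all $\beta \in \alpha$ and all $\gamma \subseteq \beta$ with $\mathrm{relpl}_\alpha(\gamma)$, we have $\gamma \in \alpha$ and $\forall \delta \in \alpha\,(\beta \in \delta \rightarrow \gamma \in \delta)$. Elements of $\mathrm{PlOrd}$ are called plump ordinals. *)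

theory Defs
  imports Main
begin

section \<open>Deep embedding of first-order set-theoretic formulas (de Bruijn indices)\<close>

datatype fm =
    Mem nat nat        (* Mem i j : variable i is an element of variable j *)
  | Eq nat nat
  | Bot
  | Conj fm fm
  | Disj fm fm
  | Imp fm fm
  | All fm             (* binds de Bruijn index 0 *)
  | Ex fm

definition up :: "(nat \<Rightarrow> nat) \<Rightarrow> nat \<Rightarrow> nat" where
  "up f = (\<lambda>i. case i of 0 \<Rightarrow> 0 | Suc n \<Rightarrow> Suc (f n))"

fun ren :: "(nat \<Rightarrow> nat) \<Rightarrow> fm \<Rightarrow> fm" where
  "ren f (Mem i j) = Mem (f i) (f j)"
| "ren f (Eq i j) = Eq (f i) (f j)"
| "ren f Bot = Bot"
| "ren f (Conj p q) = Conj (ren f p) (ren f q)"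
| "ren f (Disj p q) = Disj (ren f p) (ren f q)"
| "ren f (Imp p q) = Imp (ren f p) (ren f q)"
| "ren f (All p) = All (ren (up f) p)"
| "ren f (Ex p) = Ex (ren (up f) p)"

definition sub :: "nat \<Rightarrow> nat \<Rightarrow> nat" where
  "sub t = (\<lambda>i. case i of 0 \<Rightarrow> t | Suc n \<Rightarrow> n)"

definition Iff :: "fm \<Rightarrow> fm \<Rightarrow> fm" where
  "Iff p q = Conj (Imp p q) (Imp q p)"

inductive delta0 :: "fm \<Rightarrow> bool" where
  "delta0 (Mem i j)"
| "delta0 (Eq i j)"
| "delta0 Bot"
| "delta0 p \<Longrightarrow> delta0 q \<Longrightarrow> delta0 (Conj p q)"
| "delta0 p \<Longrightarrow> delta0 q \<Longrightarrow> delta0 (Disj p q)"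
| "delta0 p \<Longrightarrow> delta0 q \<Longrightarrow> delta0 (Imp p q)"
| "delta0 p \<Longrightarrow> delta0 (All (Imp (Mem 0 (Suc j)) p))"   (* \<forall>x\<in>y. p *)
| "delta0 p \<Longrightarrow> delta0 (Ex (Conj (Mem 0 (Suc j)) p))"   (* \<exists>x\<in>y. p *)

section \<open>Axioms of IKP (with strong infinity)\<close>

text \<open>Schema instances may contain further free variables (parameters); since
  free variables may be generalised (rule AllI), this is equivalent to using
  universal closures.\<close>

definition ax_ext :: fm where
  "ax_ext = All (All (Imp (All (Iff (Mem 0 2) (Mem 0 1))) (Eq 1 0)))"

definition ax_pair :: fm where
  "ax_pair = All (All (Ex (Conj (Mem 2 0) (Mem 1 0))))"

definition ax_union :: fm where
  "ax_union = All (Ex (All (Imp (Mem 0 2) (All (Imp (Mem 0 1) (Mem 0 2))))))"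

text \<open>Ind(w), w = variable 0: \<exists>e\<in>w (\<forall>y\<in>e. False) \<and> \<forall>x\<in>w \<exists>s\<in>w. \<forall>z (z\<in>s \<leftrightarrow> z\<in>x \<or> z = x)\<close>
definition ind_f :: fm where
  "ind_f = Conj (Ex (Conj (Mem 0 1) (All (Imp (Mem 0 1) Bot))))
                (All (Imp (Mem 0 1) (Ex (Conj (Mem 0 2)
                   (All (Iff (Mem 0 1) (Disj (Mem 0 2) (Eq 0 2))))))))"

text \<open>Strong infinity: \<exists>a (Ind(a) \<and> \<forall>b (Ind(b) \<longrightarrow> a \<subseteq> b))\<close>
definition ax_inf :: fm where
  "ax_inf = Ex (Conj ind_f (All (Imp ind_f (All (Imp (Mem 0 2) (Mem 0 1))))))"

text \<open>\<Delta>0-separation: \<forall>a \<exists>b \<forall>x (x\<in>b \<leftrightarrow> x\<in>a \<and> \<psi>(x,a,params)), where in \<psi>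
  x is index 0, a is index 1, parameters from index 2 on.\<close>
definition ax_sep :: "fm \<Rightarrow> fm" where
  "ax_sep \<psi> = All (Ex (All (Iff (Mem 0 1)
      (Conj (Mem 0 2) (ren (\<lambda>i. if i = 0 then 0 else Suc i) \<psi>)))))"

text \<open>\<Delta>0-collection: \<forall>a (\<forall>x\<in>a \<exists>y \<psi>(y,x,a,params) \<longrightarrow> \<exists>b \<forall>x\<in>a \<exists>y\<in>b \<psi>),
  where in \<psi> y is index 0, x index 1, a index 2, parameters from index 3 on.\<close>
definition ax_coll :: "fm \<Rightarrow> fm" where
  "ax_coll \<psi> = All (Imp (All (Imp (Mem 0 1) (Ex \<psi>)))
      (Ex (All (Imp (Mem 0 2) (Ex (Conj (Mem 0 2)
          (ren (\<lambda>i. if i < 2 then i else Suc i) \<psi>)))))))"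

text \<open>Set induction (full schema): (\<forall>a (\<forall>x\<in>a \<psi>(x) \<longrightarrow> \<psi>(a))) \<longrightarrow> \<forall>a \<psi>(a),
  where in \<psi> the distinguished variable is index 0, parameters from index 1 on.\<close>
definition ax_ind :: "fm \<Rightarrow> fm" where
  "ax_ind \<psi> = Imp (All (Imp (All (Imp (Mem 0 1) (ren (\<lambda>i. if i = 0 then 0 else Suc i) \<psi>))) \<psi>))
                  (All \<psi>)"

inductive_set ikp_axioms :: "fm set" where
  "ax_ext \<in> ikp_axioms"
| "ax_pair \<in> ikp_axioms"
| "ax_union \<in> ikp_axioms"
| "ax_inf \<in> ikp_axioms"
| "delta0 \<psi> \<Longrightarrow> ax_sep \<psi> \<in> ikp_axioms"
| "delta0 \<psi> \<Longrightarrow> ax_coll \<psi> \<in> ikp_axioms"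
| "ax_ind \<psi> \<in> ikp_axioms"

inductive IKP_proves :: "fm list \<Rightarrow> fm \<Rightarrow> bool" (infix "\<turnstile>\<^sub>I\<^sub>K\<^sub>P" 50) where
  Ax:    "p \<in> ikp_axioms \<Longrightarrow> G \<turnstile>\<^sub>I\<^sub>K\<^sub>P p"
| Assm:  "p \<in> set G \<Longrightarrow> G \<turnstile>\<^sub>I\<^sub>K\<^sub>P p"
| BotE:  "G \<turnstile>\<^sub>I\<^sub>K\<^sub>P Bot \<Longrightarrow> G \<turnstile>\<^sub>I\<^sub>K\<^sub>P p"
| ConjI: "G \<turnstile>\<^sub>I\<^sub>K\<^sub>P p \<Longrightarrow> G \<turnstile>\<^sub>I\<^sub>K\<^sub>P q \<Longrightarrow> G \<turnstile>\<^sub>I\<^sub>K\<^sub>P Conj p q"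
| ConjE1: "G \<turnstile>\<^sub>I\<^sub>K\<^sub>P Conj p q \<Longrightarrow> G \<turnstile>\<^sub>I\<^sub>K\<^sub>P p"
| ConjE2: "G \<turnstile>\<^sub>I\<^sub>K\<^sub>P Conj p q \<Longrightarrow> G \<turnstile>\<^sub>I\<^sub>K\<^sub>P q"
| DisjI1: "G \<turnstile>\<^sub>I\<^sub>K\<^sub>P p \<Longrightarrow> G \<turnstile>\<^sub>I\<^sub>K\<^sub>P Disj p q"
| DisjI2: "G \<turnstile>\<^sub>I\<^sub>K\<^sub>P q \<Longrightarrow> G \<turnstile>\<^sub>I\<^sub>K\<^sub>P Disj p q"
| DisjE: "G \<turnstile>\<^sub>I\<^sub>K\<^sub>P Disj p q \<Longrightarrow> p # G \<turnstile>\<^sub>I\<^sub>K\<^sub>P r \<Longrightarrow> q # G \<turnstile>\<^sub>I\<^sub>K\<^sub>P r \<Longrightarrow> G \<turnstile>\<^sub>I\<^sub>K\<^sub>P r"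
| ImpI:  "p # G \<turnstile>\<^sub>I\<^sub>K\<^sub>P q \<Longrightarrow> G \<turnstile>\<^sub>I\<^sub>K\<^sub>P Imp p q"
| ImpE:  "G \<turnstile>\<^sub>I\<^sub>K\<^sub>P Imp p q \<Longrightarrow> G \<turnstile>\<^sub>I\<^sub>K\<^sub>P p \<Longrightarrow> G \<turnstile>\<^sub>I\<^sub>K\<^sub>P q"
| AllI:  "map (ren Suc) G \<turnstile>\<^sub>I\<^sub>K\<^sub>P p \<Longrightarrow> G \<turnstile>\<^sub>I\<^sub>K\<^sub>P All p"
| AllE:  "G \<turnstile>\<^sub>I\<^sub>K\<^sub>P All p \<Longrightarrow> G \<turnstile>\<^sub>I\<^sub>K\<^sub>P ren (sub t) p"
| ExI:   "G \<turnstile>\<^sub>I\<^sub>K\<^sub>P ren (sub t) p \<Longrightarrow> G \<turnstile>\<^sub>I\<^sub>K\<^sub>P Ex p"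
| ExE:   "G \<turnstile>\<^sub>I\<^sub>K\<^sub>P Ex p \<Longrightarrow> p # map (ren Suc) G \<turnstile>\<^sub>I\<^sub>K\<^sub>P ren Suc q \<Longrightarrow> G \<turnstile>\<^sub>I\<^sub>K\<^sub>P q"
| EqRefl: "G \<turnstile>\<^sub>I\<^sub>K\<^sub>P Eq i i"
| EqSubst: "G \<turnstile>\<^sub>I\<^sub>K\<^sub>P Eq i j \<Longrightarrow> G \<turnstile>\<^sub>I\<^sub>K\<^sub>P ren (sub i) p \<Longrightarrow> G \<turnstile>\<^sub>I\<^sub>K\<^sub>P ren (sub j) p"

text \<open>a \<subseteq> b with a = index 0, b = index 1\<close>
definition sub_f :: fm where
  "sub_f = All (Imp (Mem 0 1) (Mem 0 2))"

text \<open>transitive(v), v = index 0\<close>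
definition trans_f :: fm where
  "trans_f = All (Imp (Mem 0 1) (All (Imp (Mem 0 1) (Mem 0 2))))"

text \<open>ordinal(v): transitive set of transitive sets, v = index 0\<close>
definition ord_f :: fm where
  "ord_f = Conj trans_f (All (Imp (Mem 0 1) trans_f))"

text \<open>relpl_\<alpha>(\<gamma>), \<alpha> = index 0, \<gamma> = index 1:
  \<forall>\<delta>\<in>\<gamma> \<forall>\<epsilon>\<in>\<alpha> (\<epsilon> \<subseteq> \<delta> \<longrightarrow> \<epsilon> \<in> \<gamma>)\<close>
definition relpl_f :: fm where
  "relpl_f = All (Imp (Mem 0 2) (All (Imp (Mem 0 2) (Imp sub_f (Mem 0 3)))))"

text \<open>PlOrd(\<alpha>), \<alpha> = index 0: ordinal(\<alpha>) \<and> \<forall>\<beta>\<in>\<alpha> \<forall>\<gamma> (\<gamma> \<subseteq> \<beta> \<longrightarrow> relpl_\<alpha>(\<gamma>) \<longrightarrow>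
  \<gamma> \<in> \<alpha> \<and> \<forall>\<delta>\<in>\<alpha> (\<beta> \<in> \<delta> \<longrightarrow> \<gamma> \<in> \<delta>))\<close>
definition plord_f :: fm where
  "plord_f = Conj ord_f
     (All (Imp (Mem 0 1)
        (All (Imp sub_f
           (Imp (ren (\<lambda>i. if i = 0 then 2 else 0) relpl_f)
              (Conj (Mem 0 2)
                 (All (Imp (Mem 0 3) (Imp (Mem 2 0) (Mem 1 0))))))))))"

text \<open>The statement of Proposition 2.6 as a sentence:
  \<forall>x [ (\<forall>\<beta>\<in>x. PlOrd \<beta>) \<longrightarrow> (\<forall>\<gamma> (PlOrd \<gamma> \<longrightarrow> (\<exists>\<beta>\<in>x. \<gamma> \<subseteq> \<beta>) \<longrightarrow> \<gamma> \<in> x)) \<longrightarrow> PlOrd x ]\<close>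
definition prop2p6_f :: fm where
  "prop2p6_f = All (Imp (All (Imp (Mem 0 1) plord_f))
      (Imp (All (Imp plord_f
                   (Imp (Ex (Conj (Mem 0 2) (ren (\<lambda>i. if i = 0 then 1 else 0) sub_f)))
                        (Mem 0 1))))
           plord_f))"

end

theory Submission
  imports Defs
begin

fun occ :: "nat \<Rightarrow> fm \<Rightarrow> bool" where
  "occ z (Mem i j) = (z = i \<or> z = j)"
| "occ z (Eq i j) = (z = i \<or> z = j)"
| "occ z Bot = False"
| "occ z (Conj p q) = (occ z p \<or> occ z q)"
| "occ z (Disj p q) = (occ z p \<or> occ z q)"
| "occ z (Imp p q) = (occ z p \<or> occ z q)"
| "occ z (All p) = occ (Suc z) p"
| "occ z (Ex p) = occ (Suc z) p"

lemma up_0[simp]: "up f 0 = 0" by (simp add: up_def)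
lemma up_Suc[simp]: "up f (Suc n) = Suc (f n)" by (simp add: up_def)
lemma up_1[simp]: "up f 1 = Suc (f 0)" by (simp add: up_def)
lemma up_num[simp]: "up f (numeral k) = Suc (f (pred_numeral k))" by (simp add: up_def numeral_eq_Suc)
lemma sub_0[simp]: "sub t 0 = t" by (simp add: sub_def)
lemma sub_Suc[simp]: "sub t (Suc n) = n" by (simp add: sub_def)
lemma sub_1[simp]: "sub t 1 = 0" by (simp add: sub_def)
lemma sub_num[simp]: "sub t (numeral k) = pred_numeral k" by (simp add: sub_def numeral_eq_Suc)

lemma ren_cong: "(\<And>i. occ i p \<Longrightarrow> f i = g i) \<Longrightarrow> ren f p = ren g p"
proof (induction p arbitrary: f g)
  case (Mem x y) then show ?case by simp
next
  case (Eq x y) then show ?case by simp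
next
  case Bot then show ?case by simp
next
  case (Conj p q)
  have "ren f p = ren g p" by (rule Conj.IH(1)) (simp add: Conj.prems)
  moreover have "ren f q = ren g q" by (rule Conj.IH(2)) (simp add: Conj.prems)
  ultimately show ?case by simp
next
  case (Disj p q)
  have "ren f p = ren g p" by (rule Disj.IH(1)) (simp add: Disj.prems)
  moreover have "ren f q = ren g q" by (rule Disj.IH(2)) (simp add: Disj.prems)
  ultimately show ?case by simp
next
  case (Imp p q)
  have "ren f p = ren g p" by (rule Imp.IH(1)) (simp add: Imp.prems)
  moreover have "ren f q = ren g q" by (rule Imp.IH(2)) (simp add: Imp.prems)
  ultimately show ?case by simp
next
  case (All p)
  have "ren (up f) p = ren (up g) p"
  proof (rule All.IH)
    fix i assume "occ i p" then show "up f i = up g i" by (cases i) (simp_all add: All.prems)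
  qed
  then show ?case by simp
next
  case (Ex p)
  have "ren (up f) p = ren (up g) p"
  proof (rule Ex.IH)
    fix i assume "occ i p" then show "up f i = up g i" by (cases i) (simp_all add: Ex.prems)
  qed
  then show ?case by simp
qed

lemma up_comp: "up f \<circ> up g = up (f \<circ> g)"
  by (rule ext) (simp add: up_def split: nat.split)

lemma ren_comp: "ren f (ren g p) = ren (f \<circ> g) p"
  by (induction p arbitrary: f g) (auto simp: up_comp)

lemma up_id: "up (\<lambda>i. i) = (\<lambda>i. i)"
  by (rule ext) (simp add: up_def split: nat.split)

lemma ren_id: "ren (\<lambda>i. i) p = p"
  by (induction p) (auto simp: up_id)

lemma occ_ren: "occ z (ren f p) \<longleftrightarrow> (\<exists>i. occ i p \<and> f i = z)"
proof (induction p arbitrary: f z)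
  case (All p)
  have "(\<exists>i. occ i p \<and> up f i = Suc z) \<longleftrightarrow> (\<exists>i. occ (Suc i) p \<and> f i = z)"
  proof
    assume "\<exists>i. occ i p \<and> up f i = Suc z"
    then obtain i where "occ i p" "up f i = Suc z" by blast
    then show "\<exists>i. occ (Suc i) p \<and> f i = z" by (cases i) auto
  next
    assume "\<exists>i. occ (Suc i) p \<and> f i = z"
    then show "\<exists>i. occ i p \<and> up f i = Suc z" by (metis up_Suc)
  qed
  then show ?case by (simp add: All.IH)
next
  case (Ex p)
  have "(\<exists>i. occ i p \<and> up f i = Suc z) \<longleftrightarrow> (\<exists>i. occ (Suc i) p \<and> f i = z)"
  proof
    assume "\<exists>i. occ i p \<and> up f i = Suc z"
    then obtain i where "occ i p" "up f i = Suc z" by blast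
    then show "\<exists>i. occ (Suc i) p \<and> f i = z" by (cases i) auto
  next
    assume "\<exists>i. occ (Suc i) p \<and> f i = z"
    then show "\<exists>i. occ i p \<and> up f i = Suc z" by (metis up_Suc)
  qed
  then show ?case by (simp add: Ex.IH)
qed auto

lemma finite_occ: "finite {z. occ z p}"
proof (induction p)
  case (All p)
  have "{z. occ z (All p)} = Suc -` {z. occ z p}" by auto
  moreover have "finite (Suc -` {z. occ z p})" using All finite_vimageI[of "{z. occ z p}" Suc] by (simp add: inj_def)
  ultimately show ?case by simp
next
  case (Ex p)
  have "{z. occ z (Ex p)} = Suc -` {z. occ z p}" by auto
  moreover have "finite (Suc -` {z. occ z p})" using Ex finite_vimageI[of "{z. occ z p}" Suc] by (simp add: inj_def)
  ultimately show ?case by simp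
qed (auto simp: Collect_disj_eq)

definition fresh :: "nat \<Rightarrow> fm list \<Rightarrow> bool" where
  "fresh z G = (\<forall>q\<in>set G. \<not> occ z q)"

lemma fresh_Nil[simp]: "fresh z []" by (simp add: fresh_def)
lemma fresh_Cons[simp]: "fresh z (q # G) = (\<not> occ z q \<and> fresh z G)" by (simp add: fresh_def)

lemma fresh_ex: "finite S \<Longrightarrow> \<exists>z. fresh z G \<and> z \<notin> S"
proof -
  assume "finite S"
  have "finite (S \<union> (\<Union>q\<in>set G. {z. occ z q}))" using `finite S` finite_occ by auto
  then obtain z where "z \<notin> S \<union> (\<Union>q\<in>set G. {z. occ z q})"
    using ex_new_if_finite[OF infinite_UNIV_nat] by blast
  then show ?thesis by (auto simp: fresh_def)
qed

lemma delta0_ren: "delta0 p \<Longrightarrow> delta0 (ren f p)"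
proof (induction p arbitrary: f rule: delta0.induct)
  case (7 p j)
  then show ?case using delta0.intros(7)[of "ren (up f) p" "f j"] by simp
next
  case (8 p j)
  then show ?case using delta0.intros(8)[of "ren (up f) p" "f j"] by simp
qed (auto intro: delta0.intros)

lemma sep_fun: "up (up (up f)) \<circ> (\<lambda>i. if i = 0 then 0 else Suc i) = (\<lambda>i. if i = 0 then 0 else Suc i) \<circ> up (up f)"
  by (rule ext) (simp add: up_def split: nat.split)
lemma coll_fun: "up (up (up (up f))) \<circ> (\<lambda>i. if i < 2 then i else Suc i) = (\<lambda>i. if i < 2 then i else Suc i) \<circ> up (up (up f))"
  by (rule ext) (simp add: up_def split: nat.split)
lemma ind_fun: "up (up f) \<circ> (\<lambda>i. if i = 0 then 0 else Suc i) = (\<lambda>i. if i = 0 then 0 else Suc i) \<circ> up f"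
  by (rule ext) (simp add: up_def split: nat.split)

lemma ren_ax: "p \<in> ikp_axioms \<Longrightarrow> ren f p \<in> ikp_axioms"
proof (induction rule: ikp_axioms.induct)
  case 1
  have "ren f ax_ext = ax_ext" by (simp add: ax_ext_def Iff_def)
  then show ?case using ikp_axioms.intros(1) by simp
next
  case 2
  have "ren f ax_pair = ax_pair" by (simp add: ax_pair_def)
  then show ?case using ikp_axioms.intros(2) by simp
next
  case 3
  have "ren f ax_union = ax_union" by (simp add: ax_union_def)
  then show ?case using ikp_axioms.intros(3) by simp
next
  case 4
  have "ren f ax_inf = ax_inf" by (simp add: ax_inf_def ind_f_def Iff_def)
  then show ?case using ikp_axioms.intros(4) by simp
next
  case (5 \<psi>)
  have "ren f (ax_sep \<psi>) = ax_sep (ren (up (up f)) \<psi>)"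
    by (simp add: ax_sep_def Iff_def ren_comp sep_fun)
  then show ?case using 5 by (simp add: ikp_axioms.intros delta0_ren)
next
  case (6 \<psi>)
  have "ren f (ax_coll \<psi>) = ax_coll (ren (up (up (up f))) \<psi>)"
    by (simp add: ax_coll_def ren_comp coll_fun)
  then show ?case using 6 by (simp add: ikp_axioms.intros delta0_ren)
next
  case (7 \<psi>)
  have "ren f (ax_ind \<psi>) = ax_ind (ren (up f) \<psi>)"
    by (simp add: ax_ind_def ren_comp ind_fun)
  then show ?case by (simp add: ikp_axioms.intros)
qed

lemma up_Suc_comp: "up f \<circ> Suc = Suc \<circ> f"
  by (rule ext) simp

lemma map_ren_Suc: "map (ren (up f)) (map (ren Suc) G) = map (ren Suc) (map (ren f) G)"
  by (simp add: ren_comp up_Suc_comp)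

lemma sub_fun: "sub (f t) \<circ> up f = f \<circ> sub t"
  by (rule ext) (simp add: up_def sub_def split: nat.split)

lemma ren_sub: "ren f (ren (sub t) p) = ren (sub (f t)) (ren (up f) p)"
  by (simp add: ren_comp sub_fun)

lemma ren_proves: "G \<turnstile>\<^sub>I\<^sub>K\<^sub>P p \<Longrightarrow> map (ren f) G \<turnstile>\<^sub>I\<^sub>K\<^sub>P ren f p"
proof (induction arbitrary: f rule: IKP_proves.induct)
  case (Ax p G) then show ?case by (simp add: IKP_proves.Ax ren_ax)
next
  case (Assm p G) then show ?case by (simp add: IKP_proves.Assm)
next
  case (BotE G p) then show ?case using IKP_proves.BotE by fastforce
next
  case (ConjI G p q) then show ?case by (simp add: IKP_proves.ConjI)
next
  case (ConjE1 G p q) then show ?case using IKP_proves.ConjE1 by fastforce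
next
  case (ConjE2 G p q) then show ?case using IKP_proves.ConjE2 by fastforce
next
  case (DisjI1 G p q) then show ?case by (simp add: IKP_proves.DisjI1)
next
  case (DisjI2 G q p) then show ?case by (simp add: IKP_proves.DisjI2)
next
  case (DisjE G p q r) then show ?case using IKP_proves.DisjE by fastforce
next
  case (ImpI p G q) then show ?case by (simp add: IKP_proves.ImpI)
next
  case (ImpE G p q) then show ?case using IKP_proves.ImpE by fastforce
next
  case (AllI G p)
  have "map (ren (up f)) (map (ren Suc) G) \<turnstile>\<^sub>I\<^sub>K\<^sub>P ren (up f) p" by (rule AllI.IH)
  then have "map (ren Suc) (map (ren f) G) \<turnstile>\<^sub>I\<^sub>K\<^sub>P ren (up f) p" by (simp only: map_ren_Suc)
  then show ?case by (simp add: IKP_proves.AllI)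
next
  case (AllE G p t)
  have "map (ren f) G \<turnstile>\<^sub>I\<^sub>K\<^sub>P All (ren (up f) p)" using AllE.IH by simp
  then have "map (ren f) G \<turnstile>\<^sub>I\<^sub>K\<^sub>P ren (sub (f t)) (ren (up f) p)" by (rule IKP_proves.AllE)
  then show ?case by (simp add: ren_sub)
next
  case (ExI G t p)
  have "map (ren f) G \<turnstile>\<^sub>I\<^sub>K\<^sub>P ren (sub (f t)) (ren (up f) p)" using ExI.IH[of f] by (simp add: ren_sub)
  then have "map (ren f) G \<turnstile>\<^sub>I\<^sub>K\<^sub>P Ex (ren (up f) p)" by (rule IKP_proves.ExI)
  then show ?case by simp
next
  case (ExE G p q)
  have 1: "map (ren f) G \<turnstile>\<^sub>I\<^sub>K\<^sub>P Ex (ren (up f) p)" using ExE.IH(1)[of f] by simp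
  have "map (ren (up f)) (p # map (ren Suc) G) \<turnstile>\<^sub>I\<^sub>K\<^sub>P ren (up f) (ren Suc q)" by (rule ExE.IH(2))
  moreover have "ren (up f) (ren Suc q) = ren Suc (ren f q)" by (simp add: ren_comp up_Suc_comp)
  ultimately have "ren (up f) p # map (ren Suc) (map (ren f) G) \<turnstile>\<^sub>I\<^sub>K\<^sub>P ren Suc (ren f q)"
    by (simp only: list.map map_ren_Suc)
  then show ?case using IKP_proves.ExE[OF 1] by blast
next
  case (EqRefl G i) then show ?case by (simp add: IKP_proves.EqRefl)
next
  case (EqSubst G i j p)
  have 1: "map (ren f) G \<turnstile>\<^sub>I\<^sub>K\<^sub>P Eq (f i) (f j)" using EqSubst.IH(1)[of f] by simp
  have 2: "map (ren f) G \<turnstile>\<^sub>I\<^sub>K\<^sub>P ren (sub (f i)) (ren (up f) p)" using EqSubst.IH(2)[of f] by (simp add: ren_sub)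
  show ?case using IKP_proves.EqSubst[OF 1 2] by (simp add: ren_sub)
qed

lemma weaken: "G \<turnstile>\<^sub>I\<^sub>K\<^sub>P p \<Longrightarrow> set G \<subseteq> set H \<Longrightarrow> H \<turnstile>\<^sub>I\<^sub>K\<^sub>P p"
proof (induction arbitrary: H rule: IKP_proves.induct)
  case (Ax p G) show ?case by (rule IKP_proves.Ax[OF Ax.hyps])
next
  case (Assm p G) show ?case by (rule IKP_proves.Assm) (use Assm in blast)
next
  case (BotE G p) show ?case by (rule IKP_proves.BotE[OF BotE.IH[OF BotE.prems]])
next
  case (ConjI G p q) show ?case by (rule IKP_proves.ConjI[OF ConjI.IH(1)[OF ConjI.prems] ConjI.IH(2)[OF ConjI.prems]])
next
  case (ConjE1 G p q) show ?case by (rule IKP_proves.ConjE1[OF ConjE1.IH[OF ConjE1.prems]])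
next
  case (ConjE2 G p q) show ?case by (rule IKP_proves.ConjE2[OF ConjE2.IH[OF ConjE2.prems]])
next
  case (DisjI1 G p q) show ?case by (rule IKP_proves.DisjI1[OF DisjI1.IH[OF DisjI1.prems]])
next
  case (DisjI2 G q p) show ?case by (rule IKP_proves.DisjI2[OF DisjI2.IH[OF DisjI2.prems]])
next
  case (DisjE G p q r)
  have 1: "H \<turnstile>\<^sub>I\<^sub>K\<^sub>P Disj p q" by (rule DisjE.IH(1)[OF DisjE.prems])
  have s2: "set (p # G) \<subseteq> set (p # H)" using DisjE.prems by auto
  have s3: "set (q # G) \<subseteq> set (q # H)" using DisjE.prems by auto
  show ?case by (rule IKP_proves.DisjE[OF 1 DisjE.IH(2)[OF s2] DisjE.IH(3)[OF s3]])
next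
  case (ImpI p G q)
  have s: "set (p # G) \<subseteq> set (p # H)" using ImpI.prems by auto
  show ?case by (rule IKP_proves.ImpI[OF ImpI.IH[OF s]])
next
  case (ImpE G p q)
  show ?case by (rule IKP_proves.ImpE[OF ImpE.IH(1)[OF ImpE.prems] ImpE.IH(2)[OF ImpE.prems]])
next
  case (AllI G p)
  have s: "set (map (ren Suc) G) \<subseteq> set (map (ren Suc) H)" using AllI.prems by auto
  show ?case by (rule IKP_proves.AllI[OF AllI.IH[OF s]])
next
  case (AllE G p t)
  show ?case by (rule IKP_proves.AllE[OF AllE.IH[OF AllE.prems]])
next
  case (ExI G t p)
  show ?case by (rule IKP_proves.ExI[OF ExI.IH[OF ExI.prems]])
next
  case (ExE G p q)
  have s: "set (p # map (ren Suc) G) \<subseteq> set (p # map (ren Suc) H)" using ExE.prems by auto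
  show ?case by (rule IKP_proves.ExE[OF ExE.IH(1)[OF ExE.prems] ExE.IH(2)[OF s]])
next
  case (EqRefl G i) show ?case by (rule IKP_proves.EqRefl)
next
  case (EqSubst G i j p)
  show ?case by (rule IKP_proves.EqSubst[OF EqSubst.IH(1)[OF EqSubst.prems] EqSubst.IH(2)[OF EqSubst.prems]])
qed

lemma wk: "G \<turnstile>\<^sub>I\<^sub>K\<^sub>P p \<Longrightarrow> q # G \<turnstile>\<^sub>I\<^sub>K\<^sub>P p"
  by (erule weaken) auto

lemma hyp: "p # G \<turnstile>\<^sub>I\<^sub>K\<^sub>P p" by (rule IKP_proves.Assm) simp

lemma map_ren_fresh: "fresh z G \<Longrightarrow> map (ren (\<lambda>i. if i = z then 0 else Suc i)) G = map (ren Suc) G"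
  by (auto simp: fresh_def intro!: ren_cong) 

lemma AllI_fresh:
  assumes "fresh z G" "\<not> occ z (All p)" "G \<turnstile>\<^sub>I\<^sub>K\<^sub>P ren (sub z) p"
  shows "G \<turnstile>\<^sub>I\<^sub>K\<^sub>P All p"
proof -
  let ?f = "\<lambda>i. if i = z then 0 else Suc i"
  have "map (ren ?f) G \<turnstile>\<^sub>I\<^sub>K\<^sub>P ren ?f (ren (sub z) p)" using assms(3) by (rule ren_proves)
  moreover have "ren ?f (ren (sub z) p) = p"
  proof -
    have "ren ?f (ren (sub z) p) = ren (\<lambda>i. i) p"
      unfolding ren_comp
      apply (rule ren_cong)
      using assms(2) by (auto simp: sub_def split: nat.split)
    then show ?thesis by (simp add: ren_id)
  qed
  ultimately have "map (ren Suc) G \<turnstile>\<^sub>I\<^sub>K\<^sub>P p" using map_ren_fresh[OF assms(1)] by simp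
  then show ?thesis by (rule IKP_proves.AllI)
qed

lemma ExE_fresh:
  assumes "G \<turnstile>\<^sub>I\<^sub>K\<^sub>P Ex p" "fresh z G" "\<not> occ z (Ex p)" "\<not> occ z q" "ren (sub z) p # G \<turnstile>\<^sub>I\<^sub>K\<^sub>P q"
  shows "G \<turnstile>\<^sub>I\<^sub>K\<^sub>P q"
proof -
  let ?f = "\<lambda>i. if i = z then 0 else Suc i"
  have "map (ren ?f) (ren (sub z) p # G) \<turnstile>\<^sub>I\<^sub>K\<^sub>P ren ?f q" using assms(5) by (rule ren_proves)
  moreover have "ren ?f (ren (sub z) p) = p"
  proof -
    have "ren ?f (ren (sub z) p) = ren (\<lambda>i. i) p"
      unfolding ren_comp
      apply (rule ren_cong)
      using assms(3) by (auto simp: sub_def split: nat.split)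
    then show ?thesis by (simp add: ren_id)
  qed
  moreover have "ren ?f q = ren Suc q" by (rule ren_cong) (use assms(4) in auto)
  ultimately have "p # map (ren Suc) G \<turnstile>\<^sub>I\<^sub>K\<^sub>P ren Suc q" using map_ren_fresh[OF assms(2)] by simp
  then show ?thesis using IKP_proves.ExE[OF assms(1)] by blast
qed

definition SUBS :: "nat \<Rightarrow> nat \<Rightarrow> fm" where "SUBS a b = ren (\<lambda>i. if i = 0 then a else b) sub_f"
definition TR :: "nat \<Rightarrow> fm" where "TR a = ren (\<lambda>_. a) trans_f"
definition ORD :: "nat \<Rightarrow> fm" where "ORD a = ren (\<lambda>_. a) ord_f"
definition RP :: "nat \<Rightarrow> nat \<Rightarrow> fm" where "RP a c = ren (\<lambda>i. if i = 0 then a else c) relpl_f"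
definition PL :: "nat \<Rightarrow> fm" where "PL a = ren (\<lambda>_. a) plord_f"

lemma ren_sub_f[simp]: "ren f sub_f = SUBS (f 0) (f 1)"
  by (simp add: SUBS_def sub_f_def)
lemma ren_trans_f[simp]: "ren f trans_f = TR (f 0)"
  by (simp add: TR_def trans_f_def)
lemma ren_ord_f[simp]: "ren f ord_f = ORD (f 0)"
  by (simp add: ORD_def ord_f_def trans_f_def)
lemma ren_relpl_f[simp]: "ren f relpl_f = RP (f 0) (f 1)"
  by (simp add: RP_def relpl_f_def sub_f_def)
lemma ren_plord_f[simp]: "ren f plord_f = PL (f 0)"
  by (simp add: PL_def plord_f_def ord_f_def trans_f_def relpl_f_def sub_f_def)

lemma ren_SUBS[simp]: "ren g (SUBS a b) = SUBS (g a) (g b)"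
  by (simp add: SUBS_def ren_comp del: ren_sub_f) (simp add: SUBS_def sub_f_def)
lemma ren_TR[simp]: "ren g (TR a) = TR (g a)"
  by (simp add: TR_def ren_comp del: ren_trans_f) (simp add: TR_def trans_f_def)
lemma ren_ORD[simp]: "ren g (ORD a) = ORD (g a)"
  by (simp add: ORD_def ren_comp del: ren_ord_f) (simp add: ORD_def ord_f_def trans_f_def)
lemma ren_RP[simp]: "ren g (RP a c) = RP (g a) (g c)"
  by (simp add: RP_def ren_comp del: ren_relpl_f) (simp add: RP_def relpl_f_def sub_f_def)
lemma ren_PL[simp]: "ren g (PL a) = PL (g a)"
  by (simp add: PL_def ren_comp del: ren_plord_f) (simp add: PL_def plord_f_def ord_f_def trans_f_def relpl_f_def sub_f_def)

lemma occ_SUBS[simp]: "occ z (SUBS a b) = (z = a \<or> z = b)"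
  by (auto simp: SUBS_def sub_f_def)
lemma occ_TR[simp]: "occ z (TR a) = (z = a)"
  by (auto simp: TR_def trans_f_def)
lemma occ_ORD[simp]: "occ z (ORD a) = (z = a)"
  by (auto simp: ORD_def ord_f_def trans_f_def)
lemma occ_RP[simp]: "occ z (RP a c) = (z = a \<or> z = c)"
  by (auto simp: RP_def relpl_f_def sub_f_def)
lemma occ_PL[simp]: "occ z (PL a) = (z = a)"
  by (auto simp: PL_def plord_f_def ord_f_def trans_f_def relpl_f_def sub_f_def)

lemma SUBS_unf: "SUBS a b = All (Imp (Mem 0 (Suc a)) (Mem 0 (Suc b)))"
  by (simp add: SUBS_def sub_f_def)
lemma TR_unf: "TR a = All (Imp (Mem 0 (Suc a)) (All (Imp (Mem 0 1) (Mem 0 (Suc (Suc a))))))"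
  by (simp add: TR_def trans_f_def)
lemma ORD_unf: "ORD a = Conj (TR a) (All (Imp (Mem 0 (Suc a)) (TR 0)))"
  by (simp add: ORD_def ord_f_def)
lemma RP_unf: "RP a c = All (Imp (Mem 0 (Suc c)) (All (Imp (Mem 0 (Suc (Suc a))) (Imp (SUBS 0 1) (Mem 0 (Suc (Suc c)))))))"
  by (simp add: RP_def relpl_f_def)
lemma PL_unf: "PL a = Conj (ORD a) (All (Imp (Mem 0 (Suc a)) (All (Imp (SUBS 0 1) (Imp (RP (Suc (Suc a)) 0)
   (Conj (Mem 0 (Suc (Suc a))) (All (Imp (Mem 0 (Suc (Suc (Suc a)))) (Imp (Mem 2 0) (Mem 1 0))))))))))"
  by (simp add: PL_def plord_f_def)

lemmas AllE' = IKP_proves.AllE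
lemmas ImpE' = IKP_proves.ImpE

lemma SUB_E: assumes "G \<turnstile>\<^sub>I\<^sub>K\<^sub>P SUBS a b" "G \<turnstile>\<^sub>I\<^sub>K\<^sub>P Mem t a" shows "G \<turnstile>\<^sub>I\<^sub>K\<^sub>P Mem t b"
proof -
  note h = AllE'[OF assms(1)[unfolded SUBS_unf], where t=t, simplified]
  show ?thesis by (rule ImpE'[OF h assms(2)])
qed

lemma SUB_I: assumes "fresh z G" "z \<noteq> a" "z \<noteq> b" "Mem z a # G \<turnstile>\<^sub>I\<^sub>K\<^sub>P Mem z b" shows "G \<turnstile>\<^sub>I\<^sub>K\<^sub>P SUBS a b"
  unfolding SUBS_unf
  apply (rule AllI_fresh[where z=z], simp add: assms, simp add: assms, simp)
  apply (rule IKP_proves.ImpI) by (rule assms(4))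

lemma TR_E: assumes "G \<turnstile>\<^sub>I\<^sub>K\<^sub>P TR a" "G \<turnstile>\<^sub>I\<^sub>K\<^sub>P Mem y a" "G \<turnstile>\<^sub>I\<^sub>K\<^sub>P Mem z y" shows "G \<turnstile>\<^sub>I\<^sub>K\<^sub>P Mem z a"
proof -
  note h = AllE'[OF assms(1)[unfolded TR_unf], where t=y, simplified]
  note h2 = AllE'[OF ImpE'[OF h assms(2)], where t=z, simplified]
  show ?thesis by (rule ImpE'[OF h2 assms(3)])
qed

lemma TR_I: assumes "fresh y G" "fresh z G" "y \<noteq> a" "z \<noteq> a" "z \<noteq> y"
  "Mem z y # Mem y a # G \<turnstile>\<^sub>I\<^sub>K\<^sub>P Mem z a" shows "G \<turnstile>\<^sub>I\<^sub>K\<^sub>P TR a"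
  unfolding TR_unf
  apply (rule AllI_fresh[where z=y], simp add: assms, simp add: assms, simp)
  apply (rule IKP_proves.ImpI)
  apply (rule AllI_fresh[where z=z], simp add: assms, simp add: assms, simp)
  apply (rule IKP_proves.ImpI) by (rule assms(6))

lemma ORD_E1: "G \<turnstile>\<^sub>I\<^sub>K\<^sub>P ORD a \<Longrightarrow> G \<turnstile>\<^sub>I\<^sub>K\<^sub>P TR a"
  unfolding ORD_unf by (rule IKP_proves.ConjE1)

lemma ORD_E2: assumes "G \<turnstile>\<^sub>I\<^sub>K\<^sub>P ORD a" "G \<turnstile>\<^sub>I\<^sub>K\<^sub>P Mem y a" shows "G \<turnstile>\<^sub>I\<^sub>K\<^sub>P TR y"
proof -
  note h = AllE'[OF IKP_proves.ConjE2[OF assms(1)[unfolded ORD_unf]], where t=y, simplified]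
  show ?thesis by (rule ImpE'[OF h assms(2)])
qed

lemma ORD_I: assumes "G \<turnstile>\<^sub>I\<^sub>K\<^sub>P TR a" "fresh y G" "y \<noteq> a" "Mem y a # G \<turnstile>\<^sub>I\<^sub>K\<^sub>P TR y"
  shows "G \<turnstile>\<^sub>I\<^sub>K\<^sub>P ORD a"
  unfolding ORD_unf
  apply (rule IKP_proves.ConjI, rule assms(1))
  apply (rule AllI_fresh[where z=y], simp add: assms, simp add: assms, simp)
  apply (rule IKP_proves.ImpI) by (rule assms(4))

lemma RP_E: assumes "G \<turnstile>\<^sub>I\<^sub>K\<^sub>P RP a c" "G \<turnstile>\<^sub>I\<^sub>K\<^sub>P Mem d c" "G \<turnstile>\<^sub>I\<^sub>K\<^sub>P Mem e a" "G \<turnstile>\<^sub>I\<^sub>K\<^sub>P SUBS e d"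
  shows "G \<turnstile>\<^sub>I\<^sub>K\<^sub>P Mem e c"
proof -
  note h = AllE'[OF assms(1)[unfolded RP_unf], where t=d, simplified]
  note h2 = AllE'[OF ImpE'[OF h assms(2)], where t=e, simplified]
  show ?thesis by (rule ImpE'[OF ImpE'[OF h2 assms(3)] assms(4)])
qed

lemma RP_I: assumes "fresh d G" "fresh e G" "d \<noteq> a" "d \<noteq> c" "e \<noteq> a" "e \<noteq> c" "e \<noteq> d"
  "SUBS e d # Mem e a # Mem d c # G \<turnstile>\<^sub>I\<^sub>K\<^sub>P Mem e c" shows "G \<turnstile>\<^sub>I\<^sub>K\<^sub>P RP a c"
  unfolding RP_unf
  apply (rule AllI_fresh[where z=d], simp add: assms, simp add: assms, simp)
  apply (rule IKP_proves.ImpI)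
  apply (rule AllI_fresh[where z=e], simp add: assms, simp add: assms, simp)
  apply (rule IKP_proves.ImpI)
  apply (rule IKP_proves.ImpI) by (rule assms(8))

lemma PL_E0: "G \<turnstile>\<^sub>I\<^sub>K\<^sub>P PL a \<Longrightarrow> G \<turnstile>\<^sub>I\<^sub>K\<^sub>P ORD a"
  unfolding PL_unf by (rule IKP_proves.ConjE1)

lemma PL_E: assumes "G \<turnstile>\<^sub>I\<^sub>K\<^sub>P PL a" "G \<turnstile>\<^sub>I\<^sub>K\<^sub>P Mem b a" "G \<turnstile>\<^sub>I\<^sub>K\<^sub>P SUBS c b" "G \<turnstile>\<^sub>I\<^sub>K\<^sub>P RP a c"
  shows "G \<turnstile>\<^sub>I\<^sub>K\<^sub>P Conj (Mem c a) (All (Imp (Mem 0 (Suc a)) (Imp (Mem (Suc b) 0) (Mem (Suc c) 0))))"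
proof -
  note h = AllE'[OF IKP_proves.ConjE2[OF assms(1)[unfolded PL_unf]], where t=b, simplified]
  note h2 = AllE'[OF ImpE'[OF h assms(2)], where t=c, simplified]
  show ?thesis by (rule ImpE'[OF ImpE'[OF h2 assms(3)] assms(4)])
qed

lemma PL_E1: assumes "G \<turnstile>\<^sub>I\<^sub>K\<^sub>P PL a" "G \<turnstile>\<^sub>I\<^sub>K\<^sub>P Mem b a" "G \<turnstile>\<^sub>I\<^sub>K\<^sub>P SUBS c b" "G \<turnstile>\<^sub>I\<^sub>K\<^sub>P RP a c"
  shows "G \<turnstile>\<^sub>I\<^sub>K\<^sub>P Mem c a"
  using IKP_proves.ConjE1[OF PL_E[OF assms]] .

lemma PL_E2: assumes "G \<turnstile>\<^sub>I\<^sub>K\<^sub>P PL a" "G \<turnstile>\<^sub>I\<^sub>K\<^sub>P Mem b a" "G \<turnstile>\<^sub>I\<^sub>K\<^sub>P SUBS c b" "G \<turnstile>\<^sub>I\<^sub>K\<^sub>P RP a c"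
  "G \<turnstile>\<^sub>I\<^sub>K\<^sub>P Mem d a" "G \<turnstile>\<^sub>I\<^sub>K\<^sub>P Mem b d"
  shows "G \<turnstile>\<^sub>I\<^sub>K\<^sub>P Mem c d"
proof -
  note h = AllE'[OF IKP_proves.ConjE2[OF PL_E[OF assms(1-4)]], where t=d, simplified]
  show ?thesis by (rule ImpE'[OF ImpE'[OF h assms(5)] assms(6)])
qed

lemma PL_I: assumes "G \<turnstile>\<^sub>I\<^sub>K\<^sub>P ORD a" "fresh b G" "fresh c G" "b \<noteq> a" "c \<noteq> a" "c \<noteq> b"
  "RP a c # SUBS c b # Mem b a # G \<turnstile>\<^sub>I\<^sub>K\<^sub>P Mem c a"
  "fresh d G" "d \<noteq> a" "d \<noteq> b" "d \<noteq> c"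
  "Mem b d # Mem d a # RP a c # SUBS c b # Mem b a # G \<turnstile>\<^sub>I\<^sub>K\<^sub>P Mem c d"
  shows "G \<turnstile>\<^sub>I\<^sub>K\<^sub>P PL a"
  unfolding PL_unf
  apply (rule IKP_proves.ConjI, rule assms(1))
  apply (rule AllI_fresh[where z=b], simp add: assms, simp add: assms, simp)
  apply (rule IKP_proves.ImpI)
  apply (rule AllI_fresh[where z=c], simp add: assms, simp add: assms, simp)
  apply (rule IKP_proves.ImpI)
  apply (rule IKP_proves.ImpI)
  apply (rule IKP_proves.ConjI, rule assms(7))
  apply (rule AllI_fresh[where z=d], simp add: assms, simp add: assms, simp)
  apply (rule IKP_proves.ImpI)
  apply (rule IKP_proves.ImpI) by (rule assms(12))

definition psi :: "nat \<Rightarrow> fm" where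
  "psi a = All (Imp (Mem 0 (Suc (Suc a))) (All (Imp (Mem 0 (Suc (Suc (Suc a)))) (Imp (SUBS 1 2) (Imp (Mem 2 0) (Mem 1 0))))))"

definition Qf :: "nat \<Rightarrow> nat \<Rightarrow> fm" where
  "Qf a d = All (Imp (Mem 0 (Suc a)) (All (Imp (Mem 0 (Suc (Suc a))) (Imp (SUBS 1 (Suc (Suc d))) (Imp (Mem (Suc (Suc d)) 0) (Mem 1 0))))))"

definition IHf :: "nat \<Rightarrow> nat \<Rightarrow> fm" where
  "IHf a d = All (Imp (Mem 0 (Suc d)) (ren (up (sub d)) (ren (\<lambda>i. if i = 0 then 0 else Suc i) (psi a))))"

lemma psi_inst: "ren (sub d) (psi a) = Qf a d"
  by (simp add: psi_def Qf_def)

lemma step_inst: "ren (sub d) (Imp (All (Imp (Mem 0 1) (ren (\<lambda>i. if i = 0 then 0 else Suc i) (psi a)))) (psi a))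
   = Imp (IHf a d) (Qf a d)"
  by (simp add: IHf_def psi_inst)

lemma occ_Qf[simp]: "occ z (Qf a d) = (z = a \<or> z = d)"
  by (auto simp: Qf_def)

lemma occ_IHf[simp]: "occ z (IHf a d) = (z = a \<or> z = d)"
  by (auto simp: IHf_def psi_def occ_ren up_def sub_def split: nat.splits if_splits)

lemma IH_E: assumes "G \<turnstile>\<^sub>I\<^sub>K\<^sub>P IHf a d" "G \<turnstile>\<^sub>I\<^sub>K\<^sub>P Mem d' d" shows "G \<turnstile>\<^sub>I\<^sub>K\<^sub>P Qf a d'"
proof -
  note h = AllE'[OF assms(1)[unfolded IHf_def], where t=d', simplified]
  have "G \<turnstile>\<^sub>I\<^sub>K\<^sub>P ren (sub d') (ren (up (sub d)) (ren (\<lambda>i. if i = 0 then 0 else Suc i) (psi a)))"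
    using ImpE'[OF h assms(2)] by simp
  then show ?thesis by (simp add: psi_def Qf_def)
qed

lemma Q_E: assumes "G \<turnstile>\<^sub>I\<^sub>K\<^sub>P Qf a d" "G \<turnstile>\<^sub>I\<^sub>K\<^sub>P Mem e' a" "G \<turnstile>\<^sub>I\<^sub>K\<^sub>P Mem e a" "G \<turnstile>\<^sub>I\<^sub>K\<^sub>P SUBS e' d" "G \<turnstile>\<^sub>I\<^sub>K\<^sub>P Mem d e"
  shows "G \<turnstile>\<^sub>I\<^sub>K\<^sub>P Mem e' e"
proof -
  note h = AllE'[OF assms(1)[unfolded Qf_def], where t=e', simplified]
  note h2 = AllE'[OF ImpE'[OF h assms(2)], where t=e, simplified]
  show ?thesis by (rule ImpE'[OF ImpE'[OF ImpE'[OF h2 assms(3)] assms(4)] assms(5)])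
qed

lemma Q_I: assumes "fresh e' G" "fresh e G" "e' \<noteq> a" "e' \<noteq> d" "e \<noteq> a" "e \<noteq> d" "e \<noteq> e'"
  "Mem d e # SUBS e' d # Mem e a # Mem e' a # G \<turnstile>\<^sub>I\<^sub>K\<^sub>P Mem e' e" shows "G \<turnstile>\<^sub>I\<^sub>K\<^sub>P Qf a d"
  unfolding Qf_def
  apply (rule AllI_fresh[where z=e'], simp add: assms, simp add: assms, simp)
  apply (rule IKP_proves.ImpI)
  apply (rule AllI_fresh[where z=e], simp add: assms, simp add: assms, simp)
  apply (rule IKP_proves.ImpI)
  apply (rule IKP_proves.ImpI)
  apply (rule IKP_proves.ImpI) by (rule assms(8))

lemma asm: "p \<in> set G \<Longrightarrow> G \<turnstile>\<^sub>I\<^sub>K\<^sub>P p" by (rule IKP_proves.Assm)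

lemma fresh_obt: "finite S \<Longrightarrow> (\<And>z. fresh z G \<Longrightarrow> z \<notin> S \<Longrightarrow> P) \<Longrightarrow> P"
  using fresh_ex by blast

lemma fresh_ex2: "\<exists>z. fresh z G \<and> z \<notin> set xs"
  using fresh_ex[of "set xs" G] by simp

lemma L1: assumes pa: "G \<turnstile>\<^sub>I\<^sub>K\<^sub>P PL a" and "G \<turnstile>\<^sub>I\<^sub>K\<^sub>P Mem e a" "G \<turnstile>\<^sub>I\<^sub>K\<^sub>P Mem e' a" "G \<turnstile>\<^sub>I\<^sub>K\<^sub>P Mem d e" "G \<turnstile>\<^sub>I\<^sub>K\<^sub>P SUBS e' d"
  shows "G \<turnstile>\<^sub>I\<^sub>K\<^sub>P Mem e' e"
proof -
  have step: "G \<turnstile>\<^sub>I\<^sub>K\<^sub>P All (Imp (All (Imp (Mem 0 1) (ren (\<lambda>i. if i = 0 then 0 else Suc i) (psi a)))) (psi a))"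
  proof -
    obtain d0 where d0: "fresh d0 G" "d0 \<notin> set [a]" using fresh_ex2 by blast
    let ?G1 = "IHf a d0 # G"
    obtain e'0 where e'0: "fresh e'0 G" "e'0 \<notin> set [a, d0]" using fresh_ex2 by blast
    obtain e0 where e0: "fresh e0 G" "e0 \<notin> set [a, d0, e'0]" using fresh_ex2 by blast
    let ?G2 = "Mem d0 e0 # SUBS e'0 d0 # Mem e0 a # Mem e'0 a # ?G1"
    have pa2: "?G2 \<turnstile>\<^sub>I\<^sub>K\<^sub>P PL a" using pa by (rule weaken) auto
    have ta2: "?G2 \<turnstile>\<^sub>I\<^sub>K\<^sub>P TR a" by (rule ORD_E1[OF PL_E0[OF pa2]])
    have d0a: "?G2 \<turnstile>\<^sub>I\<^sub>K\<^sub>P Mem d0 a" by (rule TR_E[OF ta2, of e0]) (rule asm, simp)+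
    obtain d1 where d1: "fresh d1 ?G2" "d1 \<notin> set [a, e'0]" using fresh_ex2 by blast
    obtain e1 where e1: "fresh e1 ?G2" "e1 \<notin> set [a, e'0, d1]" using fresh_ex2 by blast
    let ?G3 = "SUBS e1 d1 # Mem e1 a # Mem d1 e'0 # ?G2"
    have "?G3 \<turnstile>\<^sub>I\<^sub>K\<^sub>P Mem e1 e'0"
    proof -
      have "?G3 \<turnstile>\<^sub>I\<^sub>K\<^sub>P Mem d1 d0" by (rule SUB_E[of _ e'0]) (rule asm, simp)+
      then have "?G3 \<turnstile>\<^sub>I\<^sub>K\<^sub>P Qf a d1" by (rule IH_E[rotated]) (rule asm, simp)
      then show ?thesis by (rule Q_E) (rule asm, simp)+
    qed
    then have rp: "?G2 \<turnstile>\<^sub>I\<^sub>K\<^sub>P RP a e'0"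
      by (intro RP_I[of d1 _ e1]) (use d1 e1 in auto)
    have "?G2 \<turnstile>\<^sub>I\<^sub>K\<^sub>P Mem e'0 e0"
      by (rule PL_E2[OF pa2 d0a _ rp]) (rule asm, simp)+
    then have "?G1 \<turnstile>\<^sub>I\<^sub>K\<^sub>P Qf a d0"
      by (intro Q_I[of e'0 _ e0]) (use d0 e'0 e0 in auto)
    then have imp: "G \<turnstile>\<^sub>I\<^sub>K\<^sub>P Imp (IHf a d0) (Qf a d0)" by (rule IKP_proves.ImpI)
    show ?thesis
    proof (rule AllI_fresh[where z=d0])
      show "fresh d0 G" using d0 by simp
      show "\<not> occ d0 (All (Imp (All (Imp (Mem 0 1) (ren (\<lambda>i. if i = 0 then 0 else Suc i) (psi a)))) (psi a)))"
        using d0 by (auto simp: psi_def occ_ren split: if_splits)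
      show "G \<turnstile>\<^sub>I\<^sub>K\<^sub>P ren (sub d0) (Imp (All (Imp (Mem 0 1) (ren (\<lambda>i. if i = 0 then 0 else Suc i) (psi a)))) (psi a))"
        unfolding step_inst by (rule imp)
    qed
  qed
  have ax: "G \<turnstile>\<^sub>I\<^sub>K\<^sub>P ax_ind (psi a)" by (rule IKP_proves.Ax) (rule ikp_axioms.intros)
  have "G \<turnstile>\<^sub>I\<^sub>K\<^sub>P All (psi a)" using ImpE'[OF ax[unfolded ax_ind_def] step] .
  then have "G \<turnstile>\<^sub>I\<^sub>K\<^sub>P Qf a d" using AllE'[where t=d] psi_inst by metis
  then show ?thesis by (rule Q_E) (use assms in auto)
qed

lemma L2: assumes pa: "G \<turnstile>\<^sub>I\<^sub>K\<^sub>P PL a" and ba: "G \<turnstile>\<^sub>I\<^sub>K\<^sub>P Mem b a" shows "G \<turnstile>\<^sub>I\<^sub>K\<^sub>P PL b"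
proof -
  have oa: "G \<turnstile>\<^sub>I\<^sub>K\<^sub>P ORD a" by (rule PL_E0[OF pa])
  have ta: "G \<turnstile>\<^sub>I\<^sub>K\<^sub>P TR a" by (rule ORD_E1[OF oa])
  have tb: "G \<turnstile>\<^sub>I\<^sub>K\<^sub>P TR b" by (rule ORD_E2[OF oa ba])
  obtain y where y: "fresh y G" "y \<notin> set [a, b]" using fresh_ex2 by blast
  have "Mem y b # G \<turnstile>\<^sub>I\<^sub>K\<^sub>P TR y"
  proof -
    have "Mem y b # G \<turnstile>\<^sub>I\<^sub>K\<^sub>P Mem y a" by (rule TR_E[OF wk[OF ta] wk[OF ba] hyp])
    then show ?thesis by (rule ORD_E2[OF wk[OF oa]])
  qed
  then have ob: "G \<turnstile>\<^sub>I\<^sub>K\<^sub>P ORD b" using tb y by (intro ORD_I[of _ _ y]) auto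
  obtain b' where b': "fresh b' G" "b' \<notin> set [a, b]" using fresh_ex2 by blast
  obtain c where c: "fresh c G" "c \<notin> set [a, b, b']" using fresh_ex2 by blast
  let ?G1 = "RP b c # SUBS c b' # Mem b' b # G"
  have pa1: "?G1 \<turnstile>\<^sub>I\<^sub>K\<^sub>P PL a" using pa by (rule weaken) auto
  have ta1: "?G1 \<turnstile>\<^sub>I\<^sub>K\<^sub>P TR a" using ta by (rule weaken) auto
  have tb1: "?G1 \<turnstile>\<^sub>I\<^sub>K\<^sub>P TR b" using tb by (rule weaken) auto
  have ba1: "?G1 \<turnstile>\<^sub>I\<^sub>K\<^sub>P Mem b a" using ba by (rule weaken) auto
  obtain d1 where d1: "fresh d1 ?G1" "d1 \<notin> set [a, c]" using fresh_ex2 by blast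
  obtain e1 where e1: "fresh e1 ?G1" "e1 \<notin> set [a, c, d1]" using fresh_ex2 by blast
  let ?G1' = "SUBS e1 d1 # Mem e1 a # Mem d1 c # ?G1"
  have "?G1' \<turnstile>\<^sub>I\<^sub>K\<^sub>P Mem e1 c"
  proof -
    have h1: "?G1' \<turnstile>\<^sub>I\<^sub>K\<^sub>P Mem d1 b'" by (rule SUB_E[of _ c]) (rule asm, simp)+
    have tb1': "?G1' \<turnstile>\<^sub>I\<^sub>K\<^sub>P TR b" using tb1 by (rule weaken) auto
    have pa1': "?G1' \<turnstile>\<^sub>I\<^sub>K\<^sub>P PL a" using pa1 by (rule weaken) auto
    have ba1': "?G1' \<turnstile>\<^sub>I\<^sub>K\<^sub>P Mem b a" using ba1 by (rule weaken) auto
    have h2: "?G1' \<turnstile>\<^sub>I\<^sub>K\<^sub>P Mem d1 b" by (rule TR_E[OF tb1' _ h1]) (rule asm, simp)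
    have h3: "?G1' \<turnstile>\<^sub>I\<^sub>K\<^sub>P Mem e1 b"
      by (rule L1[OF pa1' ba1' _ h2]) (rule asm, simp)+
    show ?thesis by (rule RP_E[OF _ _ h3, where d=d1]) (rule asm, simp)+
  qed
  then have rpa: "?G1 \<turnstile>\<^sub>I\<^sub>K\<^sub>P RP a c" using d1 e1 by (intro RP_I[of d1 _ e1]) auto
  have b'a: "?G1 \<turnstile>\<^sub>I\<^sub>K\<^sub>P Mem b' a" by (rule TR_E[OF ta1 ba1]) (rule asm, simp)
  have g1: "?G1 \<turnstile>\<^sub>I\<^sub>K\<^sub>P Mem c b"
    by (rule PL_E2[OF pa1 b'a _ rpa ba1]) (rule asm, simp)+
  obtain d where d: "fresh d G" "d \<notin> set [a, b, b', c]" using fresh_ex2 by blast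
  let ?G2 = "Mem b' d # Mem d b # ?G1"
  have da: "?G2 \<turnstile>\<^sub>I\<^sub>K\<^sub>P Mem d a" by (rule TR_E[OF wk[OF wk[OF ta1]] wk[OF wk[OF ba1]]]) (rule asm, simp)
  have g2: "?G2 \<turnstile>\<^sub>I\<^sub>K\<^sub>P Mem c d"
    by (rule PL_E2[OF wk[OF wk[OF pa1]] wk[OF wk[OF b'a]] _ wk[OF wk[OF rpa]] da]) (rule asm, simp)+
  show ?thesis using ob g1 g2 b' c d by (intro PL_I[of _ _ b' c d]) auto
qed

definition H1 :: "nat \<Rightarrow> fm" where "H1 x = All (Imp (Mem 0 (Suc x)) (PL 0))"
definition H2 :: "nat \<Rightarrow> fm" where
  "H2 x = All (Imp (PL 0) (Imp (Ex (Conj (Mem 0 (Suc (Suc x))) (SUBS 1 0))) (Mem 0 (Suc x))))"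

lemma occ_plord_f: "occ z plord_f = (z = 0)"
  by (auto simp: plord_f_def ord_f_def trans_f_def relpl_f_def sub_f_def)


lemma prop_unf: "\<not> occ z (All (Imp (All (Imp (Mem 0 1) plord_f))
      (Imp (All (Imp plord_f
                   (Imp (Ex (Conj (Mem 0 2) (ren (\<lambda>i. if i = 0 then 1 else 0) sub_f)))
                        (Mem 0 1))))
           plord_f)))"
  by (simp add: occ_plord_f)

lemma body_inst: "ren (sub x) (Imp (All (Imp (Mem 0 1) plord_f))
      (Imp (All (Imp plord_f
                   (Imp (Ex (Conj (Mem 0 2) (ren (\<lambda>i. if i = 0 then 1 else 0) sub_f)))
                        (Mem 0 1))))
           plord_f)) = Imp (H1 x) (Imp (H2 x) (PL x))"
  by (simp add: H1_def H2_def)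

lemma H1_E: assumes "G \<turnstile>\<^sub>I\<^sub>K\<^sub>P H1 x" "G \<turnstile>\<^sub>I\<^sub>K\<^sub>P Mem b x" shows "G \<turnstile>\<^sub>I\<^sub>K\<^sub>P PL b"
proof -
  note h = AllE'[OF assms(1)[unfolded H1_def], where t=b, simplified]
  show ?thesis by (rule ImpE'[OF h assms(2)])
qed

lemma H2_E: assumes "G \<turnstile>\<^sub>I\<^sub>K\<^sub>P H2 x" "G \<turnstile>\<^sub>I\<^sub>K\<^sub>P PL c" "G \<turnstile>\<^sub>I\<^sub>K\<^sub>P Mem b x" "G \<turnstile>\<^sub>I\<^sub>K\<^sub>P SUBS c b"
  shows "G \<turnstile>\<^sub>I\<^sub>K\<^sub>P Mem c x"
proof -
  note h = AllE'[OF assms(1)[unfolded H2_def], where t=c, simplified]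
  have "G \<turnstile>\<^sub>I\<^sub>K\<^sub>P ren (sub b) (Conj (Mem 0 (Suc x)) (SUBS (Suc c) 0))"
    using IKP_proves.ConjI[OF assms(3) assms(4)] by simp
  then have "G \<turnstile>\<^sub>I\<^sub>K\<^sub>P Ex (Conj (Mem 0 (Suc x)) (SUBS (Suc c) 0))" by (rule IKP_proves.ExI)
  then show ?thesis by (rule ImpE'[OF ImpE'[OF h assms(2)]])
qed

lemma Tx: assumes h1: "G \<turnstile>\<^sub>I\<^sub>K\<^sub>P H1 x" and h2: "G \<turnstile>\<^sub>I\<^sub>K\<^sub>P H2 x" and bx: "G \<turnstile>\<^sub>I\<^sub>K\<^sub>P Mem b x" and db: "G \<turnstile>\<^sub>I\<^sub>K\<^sub>P Mem d b"
  shows "G \<turnstile>\<^sub>I\<^sub>K\<^sub>P Mem d x"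
proof -
  have pb: "G \<turnstile>\<^sub>I\<^sub>K\<^sub>P PL b" by (rule H1_E[OF h1 bx])
  have pd: "G \<turnstile>\<^sub>I\<^sub>K\<^sub>P PL d" by (rule L2[OF pb db])
  have tb: "G \<turnstile>\<^sub>I\<^sub>K\<^sub>P TR b" by (rule ORD_E1[OF PL_E0[OF pb]])
  obtain z where z: "fresh z G" "z \<notin> set [b, d]" using fresh_ex2 by blast
  have "Mem z d # G \<turnstile>\<^sub>I\<^sub>K\<^sub>P Mem z b" by (rule TR_E[OF wk[OF tb] wk[OF db] hyp])
  then have "G \<turnstile>\<^sub>I\<^sub>K\<^sub>P SUBS d b" using z by (intro SUB_I[of z]) auto
  then show ?thesis by (rule H2_E[OF h2 pd bx])
qed

lemma TRx: assumes h1: "G \<turnstile>\<^sub>I\<^sub>K\<^sub>P H1 x" and yx: "G \<turnstile>\<^sub>I\<^sub>K\<^sub>P Mem y x" shows "G \<turnstile>\<^sub>I\<^sub>K\<^sub>P TR y"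
  by (rule ORD_E1[OF PL_E0[OF H1_E[OF h1 yx]]])

lemma mainL: assumes h1: "G \<turnstile>\<^sub>I\<^sub>K\<^sub>P H1 x" and h2: "G \<turnstile>\<^sub>I\<^sub>K\<^sub>P H2 x" shows "G \<turnstile>\<^sub>I\<^sub>K\<^sub>P PL x"
proof -
  obtain y where y: "fresh y G" "y \<notin> set [x]" using fresh_ex2 by blast
  obtain z where z: "fresh z G" "z \<notin> set [x, y]" using fresh_ex2 by blast
  have "Mem z y # Mem y x # G \<turnstile>\<^sub>I\<^sub>K\<^sub>P Mem z x"
    by (rule Tx[OF wk[OF wk[OF h1]] wk[OF wk[OF h2]], where b=y]) (rule asm, simp)+
  then have tx: "G \<turnstile>\<^sub>I\<^sub>K\<^sub>P TR x" using y z by (intro TR_I[of y _ z]) auto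
  have "Mem y x # G \<turnstile>\<^sub>I\<^sub>K\<^sub>P TR y" by (rule TRx[OF wk[OF h1] hyp])
  then have ox: "G \<turnstile>\<^sub>I\<^sub>K\<^sub>P ORD x" using tx y by (intro ORD_I[of _ _ y]) auto
  obtain b where b: "fresh b G" "b \<notin> set [x]" using fresh_ex2 by blast
  obtain c where c: "fresh c G" "c \<notin> set [x, b]" using fresh_ex2 by blast
  let ?G1 = "RP x c # SUBS c b # Mem b x # G"
  have h11: "?G1 \<turnstile>\<^sub>I\<^sub>K\<^sub>P H1 x" using h1 by (rule weaken) auto
  have h21: "?G1 \<turnstile>\<^sub>I\<^sub>K\<^sub>P H2 x" using h2 by (rule weaken) auto
  have bx1: "?G1 \<turnstile>\<^sub>I\<^sub>K\<^sub>P Mem b x" by (rule asm) simp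
  have cb1: "?G1 \<turnstile>\<^sub>I\<^sub>K\<^sub>P SUBS c b" by (rule asm) simp
  have rx1: "?G1 \<turnstile>\<^sub>I\<^sub>K\<^sub>P RP x c" by (rule asm) simp
  have tc: "?G1 \<turnstile>\<^sub>I\<^sub>K\<^sub>P TR c"
  proof -
    obtain d where d: "fresh d ?G1" "d \<notin> set [c]" using fresh_ex2 by blast
    obtain e where e: "fresh e ?G1" "e \<notin> set [c, d]" using fresh_ex2 by blast
    let ?G = "Mem e d # Mem d c # ?G1"
    have H1: "?G \<turnstile>\<^sub>I\<^sub>K\<^sub>P H1 x" by (rule wk[OF wk[OF h11]])
    have H2: "?G \<turnstile>\<^sub>I\<^sub>K\<^sub>P H2 x" by (rule wk[OF wk[OF h21]])
    have db: "?G \<turnstile>\<^sub>I\<^sub>K\<^sub>P Mem d b" by (rule SUB_E[of _ c]) (rule asm, simp)+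
    have dx: "?G \<turnstile>\<^sub>I\<^sub>K\<^sub>P Mem d x" by (rule Tx[OF H1 H2 _ db]) (rule asm, simp)
    have ex: "?G \<turnstile>\<^sub>I\<^sub>K\<^sub>P Mem e x" by (rule Tx[OF H1 H2 dx]) (rule asm, simp)
    have td: "?G \<turnstile>\<^sub>I\<^sub>K\<^sub>P TR d" by (rule TRx[OF H1 dx])
    obtain w where w: "fresh w ?G" "w \<notin> set [e, d]" using fresh_ex2 by blast
    have "Mem w e # ?G \<turnstile>\<^sub>I\<^sub>K\<^sub>P Mem w d" by (rule TR_E[OF wk[OF td] _ hyp]) (rule asm, simp)
    then have ed: "?G \<turnstile>\<^sub>I\<^sub>K\<^sub>P SUBS e d" using w by (intro SUB_I[of w]) auto
    have "?G \<turnstile>\<^sub>I\<^sub>K\<^sub>P Mem e c" by (rule RP_E[OF _ _ ex ed]) (rule asm, simp)+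
    then show ?thesis using d e by (intro TR_I[of d _ e]) auto
  qed
  have oc: "?G1 \<turnstile>\<^sub>I\<^sub>K\<^sub>P ORD c"
  proof -
    obtain y where y: "fresh y ?G1" "y \<notin> set [c]" using fresh_ex2 by blast
    have yb: "Mem y c # ?G1 \<turnstile>\<^sub>I\<^sub>K\<^sub>P Mem y b" by (rule SUB_E[OF wk[OF cb1] hyp])
    have "Mem y c # ?G1 \<turnstile>\<^sub>I\<^sub>K\<^sub>P TR y" by (rule TRx[OF wk[OF h11] Tx[OF wk[OF h11] wk[OF h21] wk[OF bx1] yb]])
    then show ?thesis using tc y by (intro ORD_I[of _ _ y]) auto
  qed
  have pb1: "?G1 \<turnstile>\<^sub>I\<^sub>K\<^sub>P PL b" by (rule H1_E[OF h11 bx1])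
  have pc: "?G1 \<turnstile>\<^sub>I\<^sub>K\<^sub>P PL c"
  proof -
    obtain b' where b': "fresh b' ?G1" "b' \<notin> set [c]" using fresh_ex2 by blast
    obtain c' where c': "fresh c' ?G1" "c' \<notin> set [c, b']" using fresh_ex2 by blast
    let ?G2 = "RP c c' # SUBS c' b' # Mem b' c # ?G1"
    have H1: "?G2 \<turnstile>\<^sub>I\<^sub>K\<^sub>P H1 x" using h11 by (rule weaken) auto
    have H2: "?G2 \<turnstile>\<^sub>I\<^sub>K\<^sub>P H2 x" using h21 by (rule weaken) auto
    have bx2: "?G2 \<turnstile>\<^sub>I\<^sub>K\<^sub>P Mem b x" by (rule asm) simp
    have tc2: "?G2 \<turnstile>\<^sub>I\<^sub>K\<^sub>P TR c" using tc by (rule weaken) auto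
    have pb2: "?G2 \<turnstile>\<^sub>I\<^sub>K\<^sub>P PL b" using pb1 by (rule weaken) auto
    have b'b: "?G2 \<turnstile>\<^sub>I\<^sub>K\<^sub>P Mem b' b" by (rule SUB_E[of _ c]) (rule asm, simp)+
    obtain d' where d': "fresh d' ?G2" "d' \<notin> set [b, c']" using fresh_ex2 by blast
    obtain e' where e': "fresh e' ?G2" "e' \<notin> set [b, c', d']" using fresh_ex2 by blast
    let ?G3 = "SUBS e' d' # Mem e' b # Mem d' c' # ?G2"
    have "?G3 \<turnstile>\<^sub>I\<^sub>K\<^sub>P Mem e' c'"
    proof -
      have db': "?G3 \<turnstile>\<^sub>I\<^sub>K\<^sub>P Mem d' b'" by (rule SUB_E[of _ c']) (rule asm, simp)+
      have dc: "?G3 \<turnstile>\<^sub>I\<^sub>K\<^sub>P Mem d' c" by (rule TR_E[OF wk[OF wk[OF wk[OF tc2]]] _ db']) (rule asm, simp)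
      have ex: "?G3 \<turnstile>\<^sub>I\<^sub>K\<^sub>P Mem e' x" by (rule Tx[OF wk[OF wk[OF wk[OF H1]]] wk[OF wk[OF wk[OF H2]]] wk[OF wk[OF wk[OF bx2]]]]) (rule asm, simp)
      have ec: "?G3 \<turnstile>\<^sub>I\<^sub>K\<^sub>P Mem e' c" by (rule RP_E[OF _ dc ex]) (rule asm, simp)+
      show ?thesis by (rule RP_E[OF _ _ ec, where d=d']) (rule asm, simp)+
    qed
    then have rbc': "?G2 \<turnstile>\<^sub>I\<^sub>K\<^sub>P RP b c'" using d' e' by (intro RP_I[of d' _ e']) auto
    have c'b: "?G2 \<turnstile>\<^sub>I\<^sub>K\<^sub>P Mem c' b" by (rule PL_E1[OF pb2 b'b _ rbc']) (rule asm, simp)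
    have c'x: "?G2 \<turnstile>\<^sub>I\<^sub>K\<^sub>P Mem c' x" by (rule Tx[OF H1 H2 bx2 c'b])
    have g1: "?G2 \<turnstile>\<^sub>I\<^sub>K\<^sub>P Mem c' c" by (rule RP_E[OF _ _ c'x, where d=b']) (rule asm, simp)+
    obtain d where d: "fresh d ?G1" "d \<notin> set [c, b', c']" using fresh_ex2 by blast
    let ?G4 = "Mem b' d # Mem d c # ?G2"
    have db: "?G4 \<turnstile>\<^sub>I\<^sub>K\<^sub>P Mem d b" by (rule SUB_E[of _ c]) (rule asm, simp)+
    have g2: "?G4 \<turnstile>\<^sub>I\<^sub>K\<^sub>P Mem c' d"
      by (rule PL_E2[OF wk[OF wk[OF pb2]] wk[OF wk[OF b'b]] _ wk[OF wk[OF rbc']] db]) (rule asm, simp)+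
    show ?thesis using oc g1 g2 b' c' d by (intro PL_I[of _ _ b' c' d]) auto
  qed
  have goal1: "?G1 \<turnstile>\<^sub>I\<^sub>K\<^sub>P Mem c x" by (rule H2_E[OF h21 pc bx1 cb1])
  obtain d where d: "fresh d G" "d \<notin> set [x, b, c]" using fresh_ex2 by blast
  let ?G4 = "Mem b d # Mem d x # ?G1"
  have pd: "?G4 \<turnstile>\<^sub>I\<^sub>K\<^sub>P PL d" by (rule H1_E[OF wk[OF wk[OF h11]]]) (rule asm, simp)
  obtain d' where d': "fresh d' ?G4" "d' \<notin> set [d, c]" using fresh_ex2 by blast
  obtain e' where e': "fresh e' ?G4" "e' \<notin> set [d, c, d']" using fresh_ex2 by blast
  let ?G5 = "SUBS e' d' # Mem e' d # Mem d' c # ?G4"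
  have h15: "?G5 \<turnstile>\<^sub>I\<^sub>K\<^sub>P H1 x" using h11 by (rule weaken) auto
  have h25: "?G5 \<turnstile>\<^sub>I\<^sub>K\<^sub>P H2 x" using h21 by (rule weaken) auto
  have ex5: "?G5 \<turnstile>\<^sub>I\<^sub>K\<^sub>P Mem e' x"
    by (rule Tx[OF h15 h25, where b=d]) (rule asm, simp)+
  have "?G5 \<turnstile>\<^sub>I\<^sub>K\<^sub>P Mem e' c" by (rule RP_E[OF _ _ ex5, where d=d']) (rule asm, simp)+
  then have rdc: "?G4 \<turnstile>\<^sub>I\<^sub>K\<^sub>P RP d c" using d' e' by (intro RP_I[of d' _ e']) auto
  have goal2: "?G4 \<turnstile>\<^sub>I\<^sub>K\<^sub>P Mem c d" by (rule PL_E1[OF pd _ _ rdc, where b=b]) (rule asm, simp)+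
  show ?thesis using ox goal1 goal2 b c d by (intro PL_I[of _ _ b c d]) auto
qed

theorem proposition2p6:
  shows "[] \<turnstile>\<^sub>I\<^sub>K\<^sub>P prop2p6_f"
proof -
  have "[H2 0, H1 0] \<turnstile>\<^sub>I\<^sub>K\<^sub>P PL 0" by (rule mainL) (rule asm, simp)+
  then have "[] \<turnstile>\<^sub>I\<^sub>K\<^sub>P Imp (H1 0) (Imp (H2 0) (PL 0))" by (intro IKP_proves.ImpI)
  then show ?thesis unfolding prop2p6_f_def
    by (intro AllI_fresh[where z=0]) (simp_all only: prop_unf fresh_Nil body_inst not_False_eq_True)
qed

end
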